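(* Let $d\ge1$ and $-1\le a<b<1$ with $a+b\ge 0$, and suppose \[ n=\frac{d\left(\left(\frac{a+b-2}{b-a}\right)^2-1\right)}{\left(\frac{a+b-2}{b-a}\right)^2-d} \] is an integer. If there exists a set of $n$ unit vectors in $\mathbb{R}^d$ such that the inner product of any two distinct ones lies in $\{a,b\}$, then there exists an equiangular tight frame consisting of $n$ vectors in $\mathbb{R}^d$.
   Context: An equiangular tight frame of $m$ vectors in $\mathbb{R}^k$ is a family of unit vectors $f_1,\dots,f_m\in\mathbb{R}^k$ such that $|\langle f_i,f_j\rangle|$ takes the same value for all $i\neq j$, and there is a constant $C>0$ with $\sum_{i=1}^m\langle x,f_i\rangle^2=C\|x\|^2$ for all $x\in\mathbb{R}^k$. *)

theory Defs
  imports "HOL-Analysis.Analysis"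
begin

definition equiangular_tight_frame :: "(nat \<Rightarrow> real ^ 'd) \<Rightarrow> nat \<Rightarrow> bool" where
  "equiangular_tight_frame f m \<longleftrightarrow>
     (\<forall>i<m. norm (f i) = 1) \<and>
     (\<exists>c. \<forall>i<m. \<forall>j<m. i \<noteq> j \<longrightarrow> \<bar>f i \<bullet> f j\<bar> = c) \<and>
     (\<exists>C>0. \<forall>x. (\<Sum>i<m. (x \<bullet> f i)^2) = C * (norm x)^2)"

end

theory Submission
  imports Defs
begin

lemma swap3:
  "(\<Sum>p\<in>A. \<Sum>q\<in>B. \<Sum>i\<in>C. f p q i) = (\<Sum>i\<in>C. \<Sum>p\<in>A. \<Sum>q\<in>B. f p q i)"
proof -
  have "(\<Sum>p\<in>A. \<Sum>q\<in>B. \<Sum>i\<in>C. f p q i) = (\<Sum>p\<in>A. \<Sum>i\<in>C. \<Sum>q\<in>B. f p q i)"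
    by (rule sum.cong[OF refl], rule sum.swap)
  also have "\<dots> = (\<Sum>i\<in>C. \<Sum>p\<in>A. \<Sum>q\<in>B. f p q i)"
    by (rule sum.swap)
  finally show ?thesis .
qed

lemma swap4:
  "(\<Sum>p\<in>A. \<Sum>q\<in>B. \<Sum>i\<in>C. \<Sum>j\<in>D. f p q i j) = (\<Sum>i\<in>C. \<Sum>j\<in>D. \<Sum>p\<in>A. \<Sum>q\<in>B. f p q i j)"
proof -
  have "(\<Sum>p\<in>A. \<Sum>q\<in>B. \<Sum>i\<in>C. \<Sum>j\<in>D. f p q i j) = (\<Sum>i\<in>C. \<Sum>p\<in>A. \<Sum>q\<in>B. \<Sum>j\<in>D. f p q i j)"
    by (rule swap3)
  also have "\<dots> = (\<Sum>i\<in>C. \<Sum>j\<in>D. \<Sum>p\<in>A. \<Sum>q\<in>B. f p q i j)"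
    by (rule sum.cong[OF refl], rule swap3)
  finally show ?thesis .
qed

lemma sq_sum_T:
  fixes x :: "nat \<Rightarrow> real ^ 'd"
  shows "(\<Sum>p\<in>UNIV. \<Sum>q\<in>UNIV. (\<Sum>i<n. x i $ p * x i $ q)^2) = (\<Sum>i<n. \<Sum>j<n. (x i \<bullet> x j)^2)"
proof -
  have "(\<Sum>p\<in>UNIV. \<Sum>q\<in>UNIV. (\<Sum>i<n. x i $ p * x i $ q)^2)
      = (\<Sum>p\<in>UNIV. \<Sum>q\<in>UNIV. \<Sum>i<n. \<Sum>j<n. (x i $ p * x j $ p) * (x i $ q * x j $ q))"
    by (simp add: power2_eq_square sum_product mult_ac)
  also have "\<dots> = (\<Sum>i<n. \<Sum>j<n. \<Sum>p\<in>UNIV. \<Sum>q\<in>UNIV. (x i $ p * x j $ p) * (x i $ q * x j $ q))"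
    by (rule swap4)
  also have "\<dots> = (\<Sum>i<n. \<Sum>j<n. (x i \<bullet> x j)^2)"
    by (simp add: inner_vec_def power2_eq_square sum_product)
  finally show ?thesis .
qed

lemma T_uu:
  fixes x :: "nat \<Rightarrow> real ^ 'd" and u :: "real ^ 'd"
  shows "(\<Sum>p\<in>UNIV. \<Sum>q\<in>UNIV. (\<Sum>i<n. x i $ p * x i $ q) * u $ p * u $ q) = (\<Sum>i<n. (x i \<bullet> u)^2)"
proof -
  have "(\<Sum>p\<in>UNIV. \<Sum>q\<in>UNIV. (\<Sum>i<n. x i $ p * x i $ q) * u $ p * u $ q)
      = (\<Sum>p\<in>UNIV. \<Sum>q\<in>UNIV. \<Sum>i<n. (x i $ p * u $ p) * (x i $ q * u $ q))"
    by (simp add: sum_distrib_left sum_distrib_right mult.commute mult.left_commute)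
  also have "\<dots> = (\<Sum>i<n. \<Sum>p\<in>UNIV. \<Sum>q\<in>UNIV. (x i $ p * u $ p) * (x i $ q * u $ q))"
    by (rule swap3)
  also have "\<dots> = (\<Sum>i<n. (x i \<bullet> u)^2)"
    by (simp add: inner_vec_def power2_eq_square sum_product)
  finally show ?thesis .
qed

lemma uu_sq:
  fixes u :: "real ^ 'd"
  shows "(\<Sum>p\<in>UNIV. \<Sum>q\<in>UNIV. (u $ p * u $ q)^2) = (u \<bullet> u)^2"
  by (simp add: inner_vec_def power2_eq_square sum_product mult_ac)

lemma T_diag:
  fixes x :: "nat \<Rightarrow> real ^ 'd"
  shows "(\<Sum>p\<in>UNIV. (\<Sum>i<n. x i $ p * x i $ p)) = (\<Sum>i<n. x i \<bullet> x i)"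
  unfolding inner_vec_def inner_real_def by (rule sum.swap)

lemma frob_expand:
  fixes T :: "'d::finite \<Rightarrow> 'd \<Rightarrow> real" and v :: "'d \<Rightarrow> real"
  shows "(\<Sum>p\<in>UNIV. \<Sum>q\<in>UNIV. (T p q - g * v p * v q - (if p = q then k else 0))^2)
     = (\<Sum>p\<in>UNIV. \<Sum>q\<in>UNIV. (T p q)^2) - 2*g*(\<Sum>p\<in>UNIV. \<Sum>q\<in>UNIV. T p q * v p * v q)
       + g^2 * (\<Sum>p\<in>UNIV. \<Sum>q\<in>UNIV. (v p * v q)^2) - 2*k*(\<Sum>p\<in>UNIV. T p p) + 2*k*g*(\<Sum>p\<in>UNIV. v p * v p)
       + k^2 * CARD('d)"
proof -
  have pw: "\<And>p q. (T p q - g * v p * v q - (if p = q then k else 0))^2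
     = (T p q)^2 - 2*g*(T p q * v p * v q) + g^2 * (v p * v q)^2
       + (if p = q then - 2*k*T p p + 2*k*g*(v p * v p) + k^2 else 0)"
    by (auto simp: power2_eq_square algebra_simps)
  have d: "\<And>p. (\<Sum>q\<in>UNIV. (if p = q then - 2*k*T p p + 2*k*g*(v p * v p) + k^2 else 0))
     = - 2*k*T p p + 2*k*g*(v p * v p) + k^2" by simp
  show ?thesis
    unfolding pw sum.distrib d by (simp add: sum.distrib sum_subtractf sum_distrib_left sum_negf)
qed

lemma quad_form:
  fixes x :: "nat \<Rightarrow> real ^ 'd" and u y :: "real ^ 'd"
  shows "(\<Sum>i<n. (y \<bullet> x i)^2) - g * (y \<bullet> u)^2 - k * (y \<bullet> y)
    = (\<Sum>p\<in>UNIV. \<Sum>q\<in>UNIV. y $ p * y $ q * ((\<Sum>i<n. x i $ p * x i $ q) - g * u $ p * u $ q - (if p = q then k else 0)))"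
proof -
  have a: "(\<Sum>i<n. (y \<bullet> x i)^2) = (\<Sum>p\<in>UNIV. \<Sum>q\<in>UNIV. y $ p * y $ q * (\<Sum>i<n. x i $ p * x i $ q))"
  proof -
    have "(\<Sum>i<n. (y \<bullet> x i)^2) = (\<Sum>i<n. \<Sum>p\<in>UNIV. \<Sum>q\<in>UNIV. y $ p * y $ q * (x i $ p * x i $ q))"
      by (simp add: inner_vec_def power2_eq_square sum_product mult_ac)
    also have "\<dots> = (\<Sum>p\<in>UNIV. \<Sum>q\<in>UNIV. \<Sum>i<n. y $ p * y $ q * (x i $ p * x i $ q))"
      by (rule swap3[symmetric])
    finally show ?thesis by (simp add: sum_distrib_left)
  qed
  have b: "(y \<bullet> u)^2 = (\<Sum>p\<in>UNIV. \<Sum>q\<in>UNIV. y $ p * y $ q * (u $ p * u $ q))"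
    by (simp add: inner_vec_def power2_eq_square sum_product mult_ac)
  have c: "y \<bullet> y = (\<Sum>p\<in>UNIV. \<Sum>q\<in>UNIV. y $ p * y $ q * (if p = q then 1 else 0))"
  proof -
    have c1: "\<And>p. (\<Sum>q\<in>UNIV. y $ p * y $ q * (if p = q then 1 else 0)) = y $ p * y $ p"
    proof -
      fix p
      have "(\<Sum>q\<in>UNIV. y $ p * y $ q * (if p = q then 1 else 0)) = (\<Sum>q\<in>UNIV. if p = q then y $ p * y $ q else 0)"
        by (rule sum.cong) auto
      then show "(\<Sum>q\<in>UNIV. y $ p * y $ q * (if p = q then 1 else 0)) = y $ p * y $ p" by simp
    qed
    show ?thesis unfolding c1 by (simp add: inner_vec_def)
  qed
  have pw: "\<And>p q. y $ p * y $ q * ((\<Sum>i<n. x i $ p * x i $ q) - g * u $ p * u $ q - (if p = q then k else 0))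
     = y $ p * y $ q * (\<Sum>i<n. x i $ p * x i $ q) - g * (y $ p * y $ q * (u $ p * u $ q))
       - k * (y $ p * y $ q * (if p = q then 1 else 0))"
    by (simp add: algebra_simps)
  show ?thesis
    unfolding a b c pw
    by (simp only: sum_subtractf sum_distrib_left)
qed


theorem mainTheorem11:
  fixes a b :: real and n :: nat
  assumes "-1 \<le> a" and "a < b" and "b < 1" and "a + b \<ge> 0"
    and "((a + b - 2) / (b - a))^2 \<noteq> real CARD('d)"
    and "real n = real CARD('d) * (((a + b - 2) / (b - a))^2 - 1)
                  / (((a + b - 2) / (b - a))^2 - real CARD('d))"
    and "\<exists>S :: (real ^ 'd) set. finite S \<and> card S = n \<and> (\<forall>x\<in>S. norm x = 1) \<and>
           (\<forall>x\<in>S. \<forall>y\<in>S. x \<noteq> y \<longrightarrow> x \<bullet> y \<in> {a, b})"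
  shows "\<exists>f :: nat \<Rightarrow> real ^ 'd. equiangular_tight_frame f n"
proof -
  obtain S :: "(real ^ 'd) set" where S: "finite S" "card S = n" "\<forall>x\<in>S. norm x = 1"
     "\<forall>x\<in>S. \<forall>y\<in>S. x \<noteq> y \<longrightarrow> x \<bullet> y \<in> {a, b}"
    using assms(7) by blast
  obtain x where xb: "bij_betw x {0..<n} S"
    using ex_bij_betw_nat_finite[OF S(1)] S(2) by blast
  have xS: "\<And>i. i < n \<Longrightarrow> x i \<in> S" using xb by (auto simp: bij_betw_def)
  have xinj: "\<And>i j. i < n \<Longrightarrow> j < n \<Longrightarrow> i \<noteq> j \<Longrightarrow> x i \<noteq> x j"
    using xb by (auto simp: bij_betw_def inj_on_def)
  have xn: "\<And>i. i < n \<Longrightarrow> x i \<bullet> x i = 1"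
    using xS S(3) by (metis norm_eq_sqrt_inner real_sqrt_eq_1_iff)
  have xab: "\<And>i j. i < n \<Longrightarrow> j < n \<Longrightarrow> i \<noteq> j \<Longrightarrow> x i \<bullet> x j = a \<or> x i \<bullet> x j = b"
    using xS S(4) xinj by blast
  define c where "c = (a + b) / 2"
  define \<delta> where "\<delta> = (b - a) / 2"
  define L where "L = ((a + b - 2) / (b - a))^2"
  define d where "d = real CARD('d)"
  have dpos: "d > 0" unfolding d_def by simp
  have c0: "c \<ge> 0" "c < 1" using assms unfolding c_def by auto
  have hL: "(1 - c)^2 = \<delta>^2 * L"
  proof -
    have e1: "1 - c = \<delta> * ((2 - a - b) / (b - a))"
      unfolding c_def \<delta>_def using assms(2) by (simp add: field_simps)
    have e2: "(a + b - 2) / (b - a) = - ((2 - a - b) / (b - a))" by (simp add: minus_divide_left)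
    show ?thesis unfolding e1 L_def e2 power2_minus by (simp only: power_mult_distrib)
  qed
  have Lne: "L \<noteq> d" using assms(5) unfolding L_def d_def by simp
  have hn: "real n * (L - d) = d * (L - 1)"
    using assms(6) Lne unfolding L_def[symmetric] d_def[symmetric] by (simp add: field_simps)
  have L1: "L > 1"
  proof -
    have "(a + b - 2) / (b - a) < -1" using assms(2,3) by (simp add: field_simps)
    then have "1 < (- ((a + b - 2) / (b - a)))^2" by (intro one_less_power) auto
    then show ?thesis unfolding L_def by simp
  qed
  have npos: "n > 0"
  proof (rule ccontr)
    assume "\<not> n > 0"
    then have "n = 0" by simp
    with hn have "d * (L - 1) = 0" by simp
    with dpos L1 show False by simp
  qed
  define u where "u = (\<Sum>i<n. x i)"
  define U where "U = u \<bullet> u"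
  have U0: "U \<ge> 0" unfolding U_def by simp
  have sumg: "(\<Sum>i<n. \<Sum>j<n. x i \<bullet> x j) = U"
    unfolding U_def u_def by (simp add: inner_sum_left inner_sum_right, rule sum.swap)
  have sumxu: "(\<Sum>i<n. x i \<bullet> u) = U"
    unfolding U_def u_def by (simp add: inner_sum_left)
  have gc_term: "\<And>i j. i < n \<Longrightarrow> j < n \<Longrightarrow> (x i \<bullet> x j - c)^2
      = \<delta>^2 + (if i = j then (1 - c)^2 - \<delta>^2 else 0)"
  proof -
    fix i j assume ij: "i < n" "j < n"
    show "(x i \<bullet> x j - c)^2 = \<delta>^2 + (if i = j then (1 - c)^2 - \<delta>^2 else 0)"
    proof (cases "i = j")
      case True then show ?thesis using xn ij by simp
    next
      case False
      then have "x i \<bullet> x j = a \<or> x i \<bullet> x j = b" using xab ij by blast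
      then show ?thesis using False unfolding c_def \<delta>_def by (auto simp: power2_eq_square field_simps)
    qed
  qed
  have gc: "(\<Sum>i<n. \<Sum>j<n. (x i \<bullet> x j - c)^2) = real n * (1 - c)^2 + real n * (real n - 1) * \<delta>^2"
  proof -
    have "(\<Sum>i<n. \<Sum>j<n. (x i \<bullet> x j - c)^2)
        = (\<Sum>i<n. \<Sum>j<n. \<delta>^2 + (if i = j then (1 - c)^2 - \<delta>^2 else 0))"
      using gc_term by (intro sum.cong refl) auto
    also have "\<dots> = (\<Sum>i<n. real n * \<delta>^2 + ((1 - c)^2 - \<delta>^2))"
      by (intro sum.cong refl) (simp add: sum.distrib)
    also have "\<dots> = real n * (1 - c)^2 + real n * (real n - 1) * \<delta>^2"
      by (simp add: algebra_simps)
    finally show ?thesis .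
  qed
  define G2 where "G2 = (\<Sum>i<n. \<Sum>j<n. (x i \<bullet> x j)^2)"
  have gexp: "(\<Sum>i<n. \<Sum>j<n. (x i \<bullet> x j - c)^2) = G2 - 2 * c * U + c^2 * (real n)^2"
  proof -
    have "(\<Sum>i<n. \<Sum>j<n. (x i \<bullet> x j - c)^2)
        = (\<Sum>i<n. \<Sum>j<n. (x i \<bullet> x j)^2 - 2 * c * (x i \<bullet> x j) + c^2)"
      by (intro sum.cong refl) (simp add: power2_eq_square algebra_simps)
    also have "\<dots> = G2 - 2 * c * U + c^2 * (real n)^2"
      unfolding G2_def sumg[symmetric]
      by (simp add: sum.distrib sum_subtractf sum_distrib_left power2_eq_square)
    finally show ?thesis .
  qed
  have key: "G2 - 2 * c * U + c^2 * (real n)^2 = (real n)^2 * (1 - c)^2 / d"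
  proof -
    have "d * (real n * (1 - c)^2 + real n * (real n - 1) * \<delta>^2) - (real n)^2 * (1 - c)^2
        = real n * \<delta>^2 * (real n * (d - L) + d * (L - 1))"
      unfolding hL by (simp add: algebra_simps power2_eq_square)
    also have "\<dots> = 0" using hn by (simp add: algebra_simps)
    finally have z: "d * (real n * (1 - c)^2 + real n * (real n - 1) * \<delta>^2) - (real n)^2 * (1 - c)^2 = 0" .
    have "d * (G2 - 2 * c * U + c^2 * (real n)^2) = (real n)^2 * (1 - c)^2"
      using z unfolding gexp[symmetric] gc by simp
    then show ?thesis using dpos by (simp add: eq_divide_eq mult.commute)
  qed
  define Q where "Q = (\<Sum>i<n. (x i \<bullet> u)^2)"
  define E2 where "E2 = (\<Sum>i<n. (x i \<bullet> u - U / real n)^2)"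
  have E2Q: "E2 = Q - U^2 / real n"
  proof -
    have "E2 = (\<Sum>i<n. (x i \<bullet> u)^2 - 2 * (U / real n) * (x i \<bullet> u) + (U / real n)^2)"
      unfolding E2_def by (intro sum.cong refl) (simp add: power2_eq_square algebra_simps)
    also have "\<dots> = Q - 2 * (U / real n) * U + real n * (U / real n)^2"
      unfolding Q_def sumxu[symmetric]
      by (simp add: sum.distrib sum_subtractf sum_distrib_left)
    also have "\<dots> = Q - U^2 / real n" using npos by (simp add: field_simps power2_eq_square)
    finally show ?thesis .
  qed
  have E2nn: "E2 \<ge> 0" unfolding E2_def by (simp add: sum_nonneg)
  define T where "T = (\<lambda>p q. \<Sum>i<n. x i $ p * x i $ q)"
  define \<Phi> where "\<Phi> = (\<lambda>g k p q. T p q - g * u $ p * u $ q - (if p = q then k else (0::real)))"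
  define E where "E = (\<lambda>g k. \<Sum>p\<in>UNIV. \<Sum>q\<in>UNIV. (\<Phi> g k p q)^2)"
  have Enn: "\<And>g k. E g k \<ge> 0" unfolding E_def by (simp add: sum_nonneg)
  have Eexp: "\<And>g k. E g k = G2 - 2 * g * Q + g^2 * U^2 - 2 * k * real n + 2 * k * g * U + k^2 * d"
  proof -
    fix g k
    have tn: "(\<Sum>p\<in>UNIV. T p p) = real n"
      unfolding T_def T_diag using xn by simp
    have uu: "(\<Sum>p\<in>UNIV. u $ p * u $ p) = U" unfolding U_def by (simp add: inner_vec_def)
    show "E g k = G2 - 2 * g * Q + g^2 * U^2 - 2 * k * real n + 2 * k * g * U + k^2 * d"
      unfolding E_def \<Phi>_def frob_expand tn uu
      unfolding T_def sq_sum_T T_uu uu_sq G2_def[symmetric] Q_def[symmetric] U_def[symmetric] d_def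
      by simp
  qed
  define k where "k = real n * (1 - c) / d"
  have kpos: "k > 0" unfolding k_def using npos c0 dpos by simp
  have notbad: "\<not> (U = 0 \<and> c > 0)"
  proof
    assume bad: "U = 0 \<and> c > 0"
    have "E 0 k = G2 - 2 * k * real n + k^2 * d" using Eexp by simp
    also have "\<dots> = (real n)^2 * (1 - c)^2 / d - c^2 * (real n)^2 - 2 * k * real n + k^2 * d"
      using key bad by simp
    also have "\<dots> = - (2 * c * (1 - c) * (real n)^2 / d) - c^2 * (real n)^2"
      unfolding k_def using dpos by (simp add: field_simps power2_eq_square)
    also have "\<dots> < 0"
    proof -
      have "2 * c * (1 - c) * (real n)^2 / d > 0" using bad c0 npos dpos by simp
      moreover have "c^2 * (real n)^2 > 0" using bad npos by simp
      ultimately show ?thesis by linarith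
    qed
    finally show False using Enn[of 0 k] by linarith
  qed
  define \<gamma> where "\<gamma> = (if c = 0 then 0 else c * real n / U)"
  have gU: "\<gamma> * U = c * real n" unfolding \<gamma>_def using notbad c0 by auto
  have g0: "\<gamma> \<ge> 0" unfolding \<gamma>_def using c0 U0 by simp
  have sum0: "E \<gamma> k + 2 * \<gamma> * E2 = 0"
  proof -
    have "E \<gamma> k + 2 * \<gamma> * E2 = G2 - 2 * (\<gamma> * U) * U / real n + (\<gamma> * U)^2
          - 2 * k * real n + 2 * k * (\<gamma> * U) + k^2 * d"
      unfolding Eexp E2Q by (simp add: algebra_simps power2_eq_square)
    also have "\<dots> = (G2 - 2 * c * U + c^2 * (real n)^2) - 2 * k * real n * (1 - c) + k^2 * d"
      unfolding gU using npos by (simp add: algebra_simps power2_eq_square)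
    also have "\<dots> = 0" unfolding key k_def using dpos by (simp add: field_simps power2_eq_square)
    finally show ?thesis .
  qed
  have E0: "E \<gamma> k = 0" and gE2: "\<gamma> * E2 = 0"
  proof -
    have "\<gamma> * E2 \<ge> 0" using E2nn g0 by simp
    then show "E \<gamma> k = 0" "\<gamma> * E2 = 0" using sum0 Enn[of \<gamma> k] by linarith+
  qed
  have Phi0: "\<And>p q. \<Phi> \<gamma> k p q = 0"
  proof -
    fix p q
    have "\<forall>p\<in>UNIV. (\<Sum>q\<in>UNIV. (\<Phi> \<gamma> k p q)^2) = 0"
      using E0 unfolding E_def by (subst sum_nonneg_eq_0_iff[symmetric]) (auto intro: sum_nonneg)
    then have "\<forall>q\<in>UNIV. (\<Phi> \<gamma> k p q)^2 = 0"
      by (subst sum_nonneg_eq_0_iff[symmetric]) auto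
    then show "\<Phi> \<gamma> k p q = 0" by simp
  qed
  have frame0: "\<And>y. (\<Sum>i<n. (y \<bullet> x i)^2) - \<gamma> * (y \<bullet> u)^2 - k * (y \<bullet> y) = 0"
    unfolding quad_form using Phi0 unfolding \<Phi>_def T_def by simp
  have xu_const: "\<gamma> \<noteq> 0 \<Longrightarrow> \<forall>i<n. x i \<bullet> u = U / real n"
  proof -
    assume "\<gamma> \<noteq> 0"
    then have "E2 = 0" using gE2 by simp
    then have "\<forall>i\<in>{..<n}. (x i \<bullet> u - U / real n)^2 = 0"
      unfolding E2_def by (subst sum_nonneg_eq_0_iff[symmetric]) auto
    then show ?thesis by simp
  qed
  have gle: "real n * \<gamma> \<le> 1"
  proof (cases "\<gamma> = 0")
    case True then show ?thesis by simp
  next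
    case False
    then have cpos: "c > 0" using c0 unfolding \<gamma>_def by (auto split: if_splits)
    then have Upos: "U > 0" using notbad U0 by auto
    have "Q = U^2 / real n"
    proof -
      have "Q = (\<Sum>i<n. (U / real n)^2)" unfolding Q_def using xu_const[OF False]
        by (intro sum.cong refl) simp
      then show ?thesis using npos by (simp add: power2_eq_square)
    qed
    moreover have "(\<Sum>i<n. (u \<bullet> x i)^2) = Q" unfolding Q_def by (simp add: inner_commute)
    ultimately have "U^2 / real n - \<gamma> * U^2 - k * U = 0" using frame0[of u] unfolding U_def by simp
    moreover have "k * U > 0" using kpos Upos by simp
    ultimately have "U^2 / real n - \<gamma> * U^2 \<ge> 0" by linarith
    then have "U^2 * (1 / real n - \<gamma>) \<ge> 0" by (simp add: algebra_simps)
    then have "1 / real n - \<gamma> \<ge> 0" using Upos by (simp add: zero_le_mult_iff)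
    then show ?thesis using npos by (simp add: field_simps)
  qed
  define r where "r = sqrt (1 - real n * \<gamma>)"
  define s where "s = (1 - r) / real n"
  have rsq: "r^2 = 1 - real n * \<gamma>" unfolding r_def using gle by simp
  have sg: "2 * s - real n * s^2 = \<gamma>"
  proof -
    have "2 * s - real n * s^2 = (1 - r^2) / real n"
      unfolding s_def using npos by (simp add: field_simps power2_eq_square)
    then show ?thesis unfolding rsq using npos by simp
  qed
  have inner_shift: "\<And>i j. i < n \<Longrightarrow> j < n \<Longrightarrow> (x i - s *\<^sub>R u) \<bullet> (x j - s *\<^sub>R u) = x i \<bullet> x j - c"
  proof -
    fix i j assume ij: "i < n" "j < n"
    have ex: "(x i - s *\<^sub>R u) \<bullet> (x j - s *\<^sub>R u) = x i \<bullet> x j - s * (x i \<bullet> u) - s * (x j \<bullet> u) + s^2 * U"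
      unfolding U_def by (simp add: inner_diff_left inner_diff_right inner_commute power2_eq_square algebra_simps)
    show "(x i - s *\<^sub>R u) \<bullet> (x j - s *\<^sub>R u) = x i \<bullet> x j - c"
    proof (cases "\<gamma> = 0")
      case True
      then have "c = 0" unfolding \<gamma>_def using notbad U0 c0 npos by (auto split: if_splits)
      moreover have "s = 0" unfolding s_def r_def using True by simp
      ultimately show ?thesis using ex by simp
    next
      case False
      have "(x i - s *\<^sub>R u) \<bullet> (x j - s *\<^sub>R u) = x i \<bullet> x j - U * (2 * s - real n * s^2) / real n"
        unfolding ex using xu_const[OF False] ij npos by (simp add: field_simps power2_eq_square)
      also have "\<dots> = x i \<bullet> x j - c" unfolding sg using gU npos by (simp add: field_simps)
      finally show ?thesis .
    qed
  qed
  have frame_shift: "\<And>y. (\<Sum>i<n. (y \<bullet> (x i - s *\<^sub>R u))^2) = k * (y \<bullet> y)"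
  proof -
    fix y
    have sy: "(\<Sum>i<n. y \<bullet> x i) = y \<bullet> u" unfolding u_def by (simp add: inner_sum_right)
    have "(\<Sum>i<n. (y \<bullet> (x i - s *\<^sub>R u))^2)
        = (\<Sum>i<n. (y \<bullet> x i)^2 - 2 * s * (y \<bullet> u) * (y \<bullet> x i) + s^2 * (y \<bullet> u)^2)"
      by (intro sum.cong refl) (simp add: inner_diff_right power2_eq_square algebra_simps)
    also have "\<dots> = (\<Sum>i<n. (y \<bullet> x i)^2) - 2 * s * (y \<bullet> u) * (y \<bullet> u) + real n * s^2 * (y \<bullet> u)^2"
      unfolding sy[symmetric] by (simp add: sum.distrib sum_subtractf sum_distrib_left)
    also have "\<dots> = (\<Sum>i<n. (y \<bullet> x i)^2) - (2 * s - real n * s^2) * (y \<bullet> u)^2"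
      by (simp add: algebra_simps power2_eq_square)
    also have "\<dots> = k * (y \<bullet> y)" unfolding sg using frame0[of y] by simp
    finally show "(\<Sum>i<n. (y \<bullet> (x i - s *\<^sub>R u))^2) = k * (y \<bullet> y)" .
  qed
  define \<kappa> where "\<kappa> = 1 / sqrt (1 - c)"
  have ksq: "\<kappa>^2 * (1 - c) = 1" unfolding \<kappa>_def using c0 by (simp add: power_divide)
  define f where "f = (\<lambda>i. \<kappa> *\<^sub>R (x i - s *\<^sub>R u))"
  have finner: "\<And>i j. i < n \<Longrightarrow> j < n \<Longrightarrow> f i \<bullet> f j = \<kappa>^2 * (x i \<bullet> x j - c)"
    unfolding f_def using inner_shift by (simp add: power2_eq_square)
  have "equiangular_tight_frame f n"
    unfolding equiangular_tight_frame_def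
  proof (intro conjI)
    show "\<forall>i<n. norm (f i) = 1"
      using finner xn ksq by (simp add: norm_eq_sqrt_inner)
    show "\<exists>C. \<forall>i<n. \<forall>j<n. i \<noteq> j \<longrightarrow> \<bar>f i \<bullet> f j\<bar> = C"
    proof (intro exI allI impI)
      fix i j assume ij: "i < n" "j < n" "i \<noteq> j"
      have "x i \<bullet> x j = a \<or> x i \<bullet> x j = b" using xab ij by blast
      then have "\<bar>x i \<bullet> x j - c\<bar> = \<delta>" unfolding c_def \<delta>_def using assms(2) by (elim disjE) (simp_all add: abs_if field_simps)
      then show "\<bar>f i \<bullet> f j\<bar> = \<kappa>^2 * \<delta>" using finner ij by (simp add: abs_mult)
    qed
    show "\<exists>C>0. \<forall>y. (\<Sum>i<n. (y \<bullet> f i)^2) = C * (norm y)^2"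
    proof (intro exI conjI allI)
      have "\<kappa> \<noteq> 0" using ksq by auto
      then show "\<kappa>^2 * k > 0" using kpos by simp
      fix y
      have "(\<Sum>i<n. (y \<bullet> f i)^2) = \<kappa>^2 * (\<Sum>i<n. (y \<bullet> (x i - s *\<^sub>R u))^2)"
        unfolding f_def by (simp add: sum_distrib_left power_mult_distrib)
      then show "(\<Sum>i<n. (y \<bullet> f i)^2) = \<kappa>^2 * k * (norm y)^2"
        using frame_shift by (simp add: power2_norm_eq_inner)
    qed
  qed
  then show ?thesis by blast
qed

end
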